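(* Let $\rho\in\Delta_{|\mathcal S|}$ have all entries positive. For any non-optimal policy $\pi$, there exists a non-optimal state-action pair $(\bar s,\bar a)$ such that $\pi(\bar a\mid\bar s)>0$ and $$A^{\pi^*}(\bar s,\bar a)\ge\frac{1-\gamma}{|\mathcal S||\mathcal A|}\big[f_\rho(\pi)-f_\rho(\pi^* )\big]>0.$$
   Context: An unregularized infinite-horizon discounted MDP: finite state space $\mathcal S$, finite action space $\mathcal A$, transition probabilities $\mathcal P(s'\mid s,a)$, cost $c:\mathcal S\times\mathcal A\to\mathbb R$, discount $\gamma\in[0,1)$. A policy $\pi$ assigns $\pi(\cdot\mid s)\in\Delta_{|\mathcal A|}$ to each state. $V^\pi(s)=\mathbb E[\sum_{t\ge0}\gamma^tc(s_t,a_t)\mid s_0=s,\ a_t\sim\pi(\cdot\mid s_t),\ s_{t+1}\sim\mathcal P(\cdot\mid s_t,a_t)]$, $Q^\pi(s,a)$ the same with $a_0=a$, and $A^\pi(s,a):=Q^\pi(s,a)-V^\pi(s)$. $\pi^*$ is a fixed optimal policy ($V^{\pi^*}(s)\le V^\pi(s)$ for all $\pi,s$). For $\rho\in\Delta_{|\mathcal S|}$, $f_\rho(\pi):=\sum_s\rho(s)V^\pi(s)$. A pair $(s,a)$ is non-optimal if $\pi^*(a\mid s)=0$; a policy $\pi$ is non-optimal if $f_\rho(\pi)-f_\rho(\pi^* )>0$. *)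

theory Defs
  imports "HOL-Analysis.Analysis"
begin

text \<open>Finite state type 's, finite action type 'a. A transition kernel is
  P :: 's => 'a => 's => real with P s a s' = P(s' | s, a); a policy is
  p :: 's => 'a => real with p s a = p(a | s).\<close>

definition is_dist :: "('b::finite \<Rightarrow> real) \<Rightarrow> bool" where
  "is_dist d \<longleftrightarrow> (\<forall>x. 0 \<le> d x) \<and> (\<Sum>x\<in>UNIV. d x) = 1"

definition is_kernel :: "('s::finite \<Rightarrow> 'a::finite \<Rightarrow> 's \<Rightarrow> real) \<Rightarrow> bool" where
  "is_kernel P \<longleftrightarrow> (\<forall>s a. is_dist (P s a))"

definition is_policy :: "('s::finite \<Rightarrow> 'a::finite \<Rightarrow> real) \<Rightarrow> bool" where
  "is_policy p \<longleftrightarrow> (\<forall>s. is_dist (p s))"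

fun state_dist :: "('s::finite \<Rightarrow> 'a::finite \<Rightarrow> 's \<Rightarrow> real) \<Rightarrow> ('s \<Rightarrow> 'a \<Rightarrow> real)
    \<Rightarrow> ('s \<Rightarrow> real) \<Rightarrow> nat \<Rightarrow> 's \<Rightarrow> real" where
  "state_dist P p mu 0 = mu"
| "state_dist P p mu (Suc t) =
     (\<lambda>s'. \<Sum>s\<in>UNIV. \<Sum>a\<in>UNIV. state_dist P p mu t s * p s a * P s a s')"

definition pol_cost :: "('s::finite \<Rightarrow> 'a::finite \<Rightarrow> real) \<Rightarrow> ('s \<Rightarrow> 'a \<Rightarrow> real) \<Rightarrow> 's \<Rightarrow> real" where
  "pol_cost c p s = (\<Sum>a\<in>UNIV. p s a * c s a)"

definition Vfun :: "('s::finite \<Rightarrow> 'a::finite \<Rightarrow> 's \<Rightarrow> real) \<Rightarrow> ('s \<Rightarrow> 'a \<Rightarrow> real) \<Rightarrow> real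
    \<Rightarrow> ('s \<Rightarrow> 'a \<Rightarrow> real) \<Rightarrow> 's \<Rightarrow> real" where
  "Vfun P c \<gamma> p s =
     (\<Sum>t. \<gamma> ^ t * (\<Sum>s'\<in>UNIV. state_dist P p (\<lambda>x. if x = s then 1 else 0) t s' * pol_cost c p s'))"

text \<open>Q^p(s,a) = E[ sum_t gamma^t c(s_t,a_t) | s_0 = s, a_0 = a ]:
  the t = 0 term is c(s,a); s_1 ~ P(.|s,a) and afterwards actions follow p.\<close>
definition Qfun :: "('s::finite \<Rightarrow> 'a::finite \<Rightarrow> 's \<Rightarrow> real) \<Rightarrow> ('s \<Rightarrow> 'a \<Rightarrow> real) \<Rightarrow> real
    \<Rightarrow> ('s \<Rightarrow> 'a \<Rightarrow> real) \<Rightarrow> 's \<Rightarrow> 'a \<Rightarrow> real" where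
  "Qfun P c \<gamma> p s a =
     c s a + (\<Sum>t. \<gamma> ^ Suc t * (\<Sum>s'\<in>UNIV. state_dist P p (P s a) t s' * pol_cost c p s'))"

definition Afun :: "('s::finite \<Rightarrow> 'a::finite \<Rightarrow> 's \<Rightarrow> real) \<Rightarrow> ('s \<Rightarrow> 'a \<Rightarrow> real) \<Rightarrow> real
    \<Rightarrow> ('s \<Rightarrow> 'a \<Rightarrow> real) \<Rightarrow> 's \<Rightarrow> 'a \<Rightarrow> real" where
  "Afun P c \<gamma> p s a = Qfun P c \<gamma> p s a - Vfun P c \<gamma> p s"

definition f_rho :: "('s::finite \<Rightarrow> 'a::finite \<Rightarrow> 's \<Rightarrow> real) \<Rightarrow> ('s \<Rightarrow> 'a \<Rightarrow> real) \<Rightarrow> real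
    \<Rightarrow> ('s \<Rightarrow> real) \<Rightarrow> ('s \<Rightarrow> 'a \<Rightarrow> real) \<Rightarrow> real" where
  "f_rho P c \<gamma> \<rho> p = (\<Sum>s\<in>UNIV. \<rho> s * Vfun P c \<gamma> p s)"

definition is_optimal :: "('s::finite \<Rightarrow> 'a::finite \<Rightarrow> 's \<Rightarrow> real) \<Rightarrow> ('s \<Rightarrow> 'a \<Rightarrow> real) \<Rightarrow> real
    \<Rightarrow> ('s \<Rightarrow> 'a \<Rightarrow> real) \<Rightarrow> bool" where
  "is_optimal P c \<gamma> ps \<longleftrightarrow> is_policy ps \<and>
     (\<forall>p. is_policy p \<longrightarrow> (\<forall>s. Vfun P c \<gamma> ps s \<le> Vfun P c \<gamma> p s))"

end

theory Submission imports Defs begin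

definition dlt :: "'s \<Rightarrow> 's \<Rightarrow> real" where
  "dlt x = (\<lambda>y. if y = x then 1 else 0)"

lemma dist_nonneg: "is_dist d \<Longrightarrow> 0 \<le> d x" by (simp add: is_dist_def)
lemma dist_sum: "is_dist d \<Longrightarrow> (\<Sum>x\<in>UNIV. d x) = 1" by (simp add: is_dist_def)
lemma dist_le1: "is_dist (d::'b::finite \<Rightarrow> real) \<Longrightarrow> d x \<le> 1"
proof -
  assume d: "is_dist d"
  have "d x \<le> (\<Sum>x\<in>UNIV. d x)"
    by (rule member_le_sum) (auto simp: dist_nonneg[OF d])
  thus ?thesis using dist_sum[OF d] by simp
qed

lemma dist_dlt: "is_dist (dlt x)" by (simp add: is_dist_def dlt_def)

locale mdp =
  fixes P :: "'s::finite \<Rightarrow> 'a::finite \<Rightarrow> 's \<Rightarrow> real" and \<gamma> :: real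
  assumes kernel: "is_kernel P" and g0: "0 \<le> \<gamma>" and g1: "\<gamma> < 1"
begin

lemma P_nonneg: "0 \<le> P s a y" using kernel by (simp add: is_kernel_def is_dist_def)
lemma P_sum: "(\<Sum>y\<in>UNIV. P s a y) = 1" using kernel by (simp add: is_kernel_def is_dist_def)

definition M :: "('s \<Rightarrow> 'a \<Rightarrow> real) \<Rightarrow> 's \<Rightarrow> 's \<Rightarrow> real" where
  "M p x y = (\<Sum>a\<in>UNIV. p x a * P x a y)"

lemma pol_nonneg: "is_policy p \<Longrightarrow> 0 \<le> p s a"
  by (simp add: is_policy_def is_dist_def)

lemma pol_sum: "is_policy p \<Longrightarrow> (\<Sum>a\<in>UNIV. p s a) = 1"
  by (simp add: is_policy_def is_dist_def)

lemma pol_le1: "is_policy p \<Longrightarrow> p s a \<le> 1"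
  by (simp add: is_policy_def dist_le1)

lemma M_nonneg: "is_policy p \<Longrightarrow> 0 \<le> M p x y"
  unfolding M_def by (intro sum_nonneg mult_nonneg_nonneg pol_nonneg P_nonneg)

lemma M_sum: "is_policy p \<Longrightarrow> (\<Sum>y\<in>UNIV. M p x y) = 1"
proof -
  assume p: "is_policy p"
  have "(\<Sum>y\<in>UNIV. M p x y) = (\<Sum>a\<in>UNIV. \<Sum>y\<in>UNIV. p x a * P x a y)"
    unfolding M_def by (rule sum.swap)
  also have "\<dots> = (\<Sum>a\<in>UNIV. p x a * (\<Sum>y\<in>UNIV. P x a y))"
    by (simp add: sum_distrib_left)
  also have "\<dots> = 1" using p by (simp add: P_sum is_policy_def is_dist_def)
  finally show ?thesis .
qed

lemma sd_nonneg: "is_policy p \<Longrightarrow> (\<And>x. 0 \<le> mu x) \<Longrightarrow> 0 \<le> state_dist P p mu t y"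
proof (induction t arbitrary: y)
  case (Suc t)
  then show ?case by (simp only: state_dist.simps) (intro sum_nonneg mult_nonneg_nonneg; simp add: Suc pol_nonneg[OF Suc.prems(1)] P_nonneg)
qed simp

lemma sd_sum: "is_policy p \<Longrightarrow> (\<Sum>y\<in>UNIV. mu y) = 1 \<Longrightarrow> (\<Sum>y\<in>UNIV. state_dist P p mu t y) = 1"
proof (induction t)
  case 0 then show ?case by simp
next
  case (Suc t)
  have "(\<Sum>y\<in>UNIV. state_dist P p mu (Suc t) y) =
     (\<Sum>s\<in>UNIV. \<Sum>y\<in>UNIV. \<Sum>a\<in>UNIV. state_dist P p mu t s * p s a * P s a y)"
    by (simp only: state_dist.simps, rule sum.swap)
  also have "\<dots> = (\<Sum>s\<in>UNIV. \<Sum>a\<in>UNIV. \<Sum>y\<in>UNIV. state_dist P p mu t s * p s a * P s a y)"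
    by (rule sum.cong[OF refl], rule sum.swap)
  also have "\<dots> = (\<Sum>s\<in>UNIV. \<Sum>a\<in>UNIV. state_dist P p mu t s * p s a * (\<Sum>y\<in>UNIV. P s a y))"
    by (simp add: sum_distrib_left)
  also have "\<dots> = (\<Sum>s\<in>UNIV. state_dist P p mu t s * (\<Sum>a\<in>UNIV. p s a))"
    by (simp add: P_sum sum_distrib_left)
  also have "\<dots> = 1" using Suc by (simp add: is_policy_def is_dist_def)
  finally show ?case .
qed

lemma sd_dist: "is_policy p \<Longrightarrow> is_dist mu \<Longrightarrow> is_dist (state_dist P p mu t)"
  using sd_nonneg sd_sum by (simp add: is_dist_def)

lemma sd_linear: "state_dist P p mu t y = (\<Sum>x\<in>UNIV. mu x * state_dist P p (dlt x) t y)"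
proof (induction t arbitrary: y)
  case 0
  have "(\<Sum>x\<in>UNIV. mu x * dlt x y) = (\<Sum>x\<in>UNIV. if x = y then mu x else 0)"
    by (rule sum.cong) (auto simp: dlt_def)
  then show ?case by simp
next
  case (Suc t)
  have "state_dist P p mu (Suc t) y = (\<Sum>s\<in>UNIV. \<Sum>a\<in>UNIV. (\<Sum>x\<in>UNIV. mu x * state_dist P p (dlt x) t s) * p s a * P s a y)"
    using Suc by simp
  also have "\<dots> = (\<Sum>s\<in>UNIV. \<Sum>a\<in>UNIV. \<Sum>x\<in>UNIV. mu x * (state_dist P p (dlt x) t s * p s a * P s a y))"
    by (simp add: sum_distrib_right mult.assoc)
  also have "\<dots> = (\<Sum>s\<in>UNIV. \<Sum>x\<in>UNIV. \<Sum>a\<in>UNIV. mu x * (state_dist P p (dlt x) t s * p s a * P s a y))"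
    by (rule sum.cong[OF refl], rule sum.swap)
  also have "\<dots> = (\<Sum>x\<in>UNIV. \<Sum>s\<in>UNIV. \<Sum>a\<in>UNIV. mu x * (state_dist P p (dlt x) t s * p s a * P s a y))"
    by (rule sum.swap)
  also have "\<dots> = (\<Sum>x\<in>UNIV. mu x * (\<Sum>s\<in>UNIV. \<Sum>a\<in>UNIV. state_dist P p (dlt x) t s * p s a * P s a y))"
    by (simp add: sum_distrib_left)
  also have "\<dots> = (\<Sum>x\<in>UNIV. mu x * state_dist P p (dlt x) (Suc t) y)" by simp
  finally show ?case .
qed

lemma sd_shift: "state_dist P p mu (Suc t) = state_dist P p (state_dist P p mu 1) t"
proof (induction t)
  case 0 then show ?case by simp
next
  case (Suc t)
  show ?case by (subst state_dist.simps(2), subst Suc, simp)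
qed

lemma sd_dlt_summable: "is_policy p \<Longrightarrow> summable (\<lambda>t. \<gamma>^t * state_dist P p (dlt x) t y)"
proof (rule summable_comparison_test[of _ "\<lambda>t. \<gamma>^t"])
  assume p: "is_policy p"
  show "\<exists>N. \<forall>n\<ge>N. norm (\<gamma> ^ n * state_dist P p (dlt x) n y) \<le> \<gamma> ^ n"
  proof (intro exI allI impI)
    fix n
    have d: "is_dist (state_dist P p (dlt x) n)" by (rule sd_dist[OF p dist_dlt])
    have "norm (\<gamma> ^ n * state_dist P p (dlt x) n y) = \<gamma>^n * state_dist P p (dlt x) n y"
      using g0 dist_nonneg[OF d] by simp
    also have "\<dots> \<le> \<gamma>^n * 1" using g0 dist_le1[OF d] by (intro mult_left_mono) auto
    finally show "norm (\<gamma> ^ n * state_dist P p (dlt x) n y) \<le> \<gamma> ^ n" by simp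
  qed
  show "summable (\<lambda>t. \<gamma>^t)" using g0 g1 by simp
qed

lemma sd_summable: "is_policy p \<Longrightarrow> summable (\<lambda>t. \<gamma>^t * state_dist P p mu t y)"
proof -
  assume p: "is_policy p"
  have "summable (\<lambda>t. \<Sum>x\<in>UNIV. mu x * (\<gamma>^t * state_dist P p (dlt x) t y))"
    by (intro summable_sum summable_mult sd_dlt_summable p)
  moreover have "(\<lambda>t. \<Sum>x\<in>UNIV. mu x * (\<gamma>^t * state_dist P p (dlt x) t y)) = (\<lambda>t. \<gamma>^t * state_dist P p mu t y)"
    by (subst (2) sd_linear) (simp add: sum_distrib_left mult.left_commute)
  ultimately show ?thesis by simp
qed

definition occ :: "('s \<Rightarrow> 'a \<Rightarrow> real) \<Rightarrow> ('s \<Rightarrow> real) \<Rightarrow> 's \<Rightarrow> real" where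
  "occ p mu y = (\<Sum>t. \<gamma>^t * state_dist P p mu t y)"

lemma occ_linear: "is_policy p \<Longrightarrow> occ p mu y = (\<Sum>x\<in>UNIV. mu x * occ p (dlt x) y)"
proof -
  assume p: "is_policy p"
  have "occ p mu y = (\<Sum>t. \<Sum>x\<in>UNIV. mu x * (\<gamma>^t * state_dist P p (dlt x) t y))"
    unfolding occ_def by (subst sd_linear) (simp add: sum_distrib_left mult.left_commute)
  also have "\<dots> = (\<Sum>x\<in>UNIV. \<Sum>t. mu x * (\<gamma>^t * state_dist P p (dlt x) t y))"
    by (rule suminf_sum) (intro summable_mult sd_dlt_summable p)
  also have "\<dots> = (\<Sum>x\<in>UNIV. mu x * occ p (dlt x) y)"
    unfolding occ_def by (intro sum.cong refl suminf_mult sd_dlt_summable p)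
  finally show ?thesis .
qed

lemma occ_step: "is_policy p \<Longrightarrow> occ p mu y = mu y + \<gamma> * occ p (state_dist P p mu 1) y"
proof -
  assume p: "is_policy p"
  let ?f = "\<lambda>t. \<gamma>^t * state_dist P p mu t y"
  have s: "summable ?f" by (rule sd_summable[OF p])
  have "(\<Sum>n. ?f (Suc n)) = (\<Sum>n. \<gamma> * (\<gamma>^n * state_dist P p (state_dist P p mu 1) n y))"
  proof -
    have "\<And>n. ?f (Suc n) = \<gamma> * (\<gamma>^n * state_dist P p (state_dist P p mu 1) n y)"
      by (simp only: sd_shift[of p mu] power_Suc mult.assoc)
    then show ?thesis by (simp only:)
  qed
  also have "\<dots> = \<gamma> * occ p (state_dist P p mu 1) y"
    unfolding occ_def by (intro suminf_mult sd_summable p)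
  finally have "(\<Sum>n. ?f (Suc n)) = \<gamma> * occ p (state_dist P p mu 1) y" .
  moreover have "(\<Sum>n. ?f (Suc n)) = occ p mu y - mu y"
    using suminf_split_head[OF s] by (simp add: occ_def)
  ultimately show ?thesis by simp
qed

lemma step_dlt: "state_dist P p (dlt x) 1 = M p x"
proof
  fix y
  have "state_dist P p (dlt x) 1 y = (\<Sum>s\<in>UNIV. if s = x then (\<Sum>a\<in>UNIV. p s a * P s a y) else 0)"
    unfolding One_nat_def state_dist.simps by (rule sum.cong) (auto simp: dlt_def mult.assoc)
  also have "\<dots> = M p x y" by (simp add: M_def)
  finally show "state_dist P p (dlt x) 1 y = M p x y" .
qed

definition G :: "('s \<Rightarrow> 'a \<Rightarrow> real) \<Rightarrow> ('s \<Rightarrow> real) \<Rightarrow> 's \<Rightarrow> real" where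
  "G p h x = (\<Sum>z\<in>UNIV. occ p (dlt x) z * h z)"

lemma G_bellman: "is_policy p \<Longrightarrow> G p h x = h x + \<gamma> * (\<Sum>y\<in>UNIV. M p x y * G p h y)"
proof -
  assume p: "is_policy p"
  have "G p h x = (\<Sum>z\<in>UNIV. (dlt x z + \<gamma> * (\<Sum>y\<in>UNIV. M p x y * occ p (dlt y) z)) * h z)"
    unfolding G_def
    by (rule sum.cong[OF refl], subst occ_step[OF p], subst step_dlt, subst occ_linear[OF p], rule refl)
  also have "\<dots> = (\<Sum>z\<in>UNIV. dlt x z * h z) + \<gamma> * (\<Sum>z\<in>UNIV. \<Sum>y\<in>UNIV. M p x y * (occ p (dlt y) z * h z))"
    by (simp add: distrib_right sum.distrib sum_distrib_left sum_distrib_right mult.assoc)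
  also have "(\<Sum>z\<in>UNIV. dlt x z * h z) = h x"
  proof -
    have "(\<Sum>z\<in>UNIV. dlt x z * h z) = (\<Sum>z\<in>UNIV. if x = z then h z else 0)"
      by (rule sum.cong) (auto simp: dlt_def)
    then show ?thesis by simp
  qed
  also have "(\<Sum>z\<in>UNIV. \<Sum>y\<in>UNIV. M p x y * (occ p (dlt y) z * h z)) = (\<Sum>y\<in>UNIV. \<Sum>z\<in>UNIV. M p x y * (occ p (dlt y) z * h z))"
    by (rule sum.swap)
  also have "\<dots> = (\<Sum>y\<in>UNIV. M p x y * G p h y)"
    unfolding G_def by (simp add: sum_distrib_left)
  finally show ?thesis .
qed

lemma W_occ: "is_policy p \<Longrightarrow> (\<Sum>t. \<gamma>^t * (\<Sum>z\<in>UNIV. state_dist P p mu t z * h z)) = (\<Sum>z\<in>UNIV. occ p mu z * h z)"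
proof -
  assume p: "is_policy p"
  have "(\<Sum>t. \<gamma>^t * (\<Sum>z\<in>UNIV. state_dist P p mu t z * h z)) = (\<Sum>t. \<Sum>z\<in>UNIV. (\<gamma>^t * state_dist P p mu t z) * h z)"
    by (simp add: sum_distrib_left mult.assoc)
  also have "\<dots> = (\<Sum>z\<in>UNIV. \<Sum>t. (\<gamma>^t * state_dist P p mu t z) * h z)"
    by (rule suminf_sum) (intro summable_mult2 sd_summable p)
  also have "\<dots> = (\<Sum>z\<in>UNIV. occ p mu z * h z)"
    unfolding occ_def by (intro sum.cong refl suminf_mult2[symmetric] sd_summable p)
  finally show ?thesis .
qed

lemma V_G: "is_policy p \<Longrightarrow> Vfun P c \<gamma> p s = G p (pol_cost c p) s"
  unfolding Vfun_def G_def dlt_def[symmetric] by (rule W_occ)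

lemma V_bellman: "is_policy p \<Longrightarrow> Vfun P c \<gamma> p s = pol_cost c p s + \<gamma> * (\<Sum>y\<in>UNIV. M p s y * Vfun P c \<gamma> p y)"
  by (simp add: V_G G_bellman[of p "pol_cost c p" s])

lemma Q_eq: "is_policy p \<Longrightarrow> Qfun P c \<gamma> p s a = c s a + \<gamma> * (\<Sum>y\<in>UNIV. P s a y * Vfun P c \<gamma> p y)"
proof -
  assume p: "is_policy p"
  have "(\<Sum>t. \<gamma> ^ Suc t * (\<Sum>s'\<in>UNIV. state_dist P p (P s a) t s' * pol_cost c p s'))
      = (\<Sum>t. \<gamma> * (\<gamma> ^ t * (\<Sum>s'\<in>UNIV. state_dist P p (P s a) t s' * pol_cost c p s')))"
    by (simp add: mult.assoc)
  also have "\<dots> = \<gamma> * (\<Sum>t. \<gamma> ^ t * (\<Sum>s'\<in>UNIV. state_dist P p (P s a) t s' * pol_cost c p s'))"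
  proof (rule suminf_mult)
    have "summable (\<lambda>t. \<Sum>s'\<in>UNIV. (\<gamma> ^ t * state_dist P p (P s a) t s') * pol_cost c p s')"
      by (intro summable_sum summable_mult2 sd_summable p)
    then show "summable (\<lambda>t. \<gamma> ^ t * (\<Sum>s'\<in>UNIV. state_dist P p (P s a) t s' * pol_cost c p s'))"
      by (simp add: sum_distrib_left mult.assoc)
  qed
  also have "(\<Sum>t. \<gamma> ^ t * (\<Sum>s'\<in>UNIV. state_dist P p (P s a) t s' * pol_cost c p s'))
     = (\<Sum>z\<in>UNIV. occ p (P s a) z * pol_cost c p z)" by (rule W_occ[OF p])
  also have "\<dots> = (\<Sum>z\<in>UNIV. \<Sum>y\<in>UNIV. P s a y * (occ p (dlt y) z * pol_cost c p z))"
    by (subst occ_linear[OF p]) (simp add: sum_distrib_right mult.assoc)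
  also have "\<dots> = (\<Sum>y\<in>UNIV. \<Sum>z\<in>UNIV. P s a y * (occ p (dlt y) z * pol_cost c p z))"
    by (rule sum.swap)
  also have "\<dots> = (\<Sum>y\<in>UNIV. P s a y * Vfun P c \<gamma> p y)"
    by (simp add: V_G[OF p] G_def sum_distrib_left)
  finally show ?thesis unfolding Qfun_def by simp
qed

lemma M_swap: "(\<Sum>b\<in>UNIV. q x b * (\<Sum>y\<in>UNIV. P x b y * f y)) = (\<Sum>y\<in>UNIV. M q x y * f y)"
proof -
  have "(\<Sum>b\<in>UNIV. q x b * (\<Sum>y\<in>UNIV. P x b y * f y)) = (\<Sum>b\<in>UNIV. \<Sum>y\<in>UNIV. q x b * P x b y * f y)"
    by (simp add: sum_distrib_left mult.assoc)
  also have "\<dots> = (\<Sum>y\<in>UNIV. \<Sum>b\<in>UNIV. q x b * P x b y * f y)" by (rule sum.swap)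
  also have "\<dots> = (\<Sum>y\<in>UNIV. M q x y * f y)" by (simp add: M_def sum_distrib_right)
  finally show ?thesis .
qed

lemma h_eq: "is_policy p \<Longrightarrow> is_policy q \<Longrightarrow>
  (\<Sum>b\<in>UNIV. p x b * Afun P c \<gamma> q x b) = pol_cost c p x + \<gamma> * (\<Sum>y\<in>UNIV. M p x y * Vfun P c \<gamma> q y) - Vfun P c \<gamma> q x"
proof -
  assume p: "is_policy p" and q: "is_policy q"
  have "(\<Sum>b\<in>UNIV. p x b * Afun P c \<gamma> q x b) =
     (\<Sum>b\<in>UNIV. p x b * c x b) + \<gamma> * (\<Sum>b\<in>UNIV. p x b * (\<Sum>y\<in>UNIV. P x b y * Vfun P c \<gamma> q y)) - (\<Sum>b\<in>UNIV. p x b) * Vfun P c \<gamma> q x"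
    by (simp add: Afun_def Q_eq[OF q] algebra_simps sum.distrib sum_subtractf sum_distrib_left sum_distrib_right)
  also have "\<dots> = pol_cost c p x + \<gamma> * (\<Sum>y\<in>UNIV. M p x y * Vfun P c \<gamma> q y) - Vfun P c \<gamma> q x"
    by (simp add: M_swap pol_sum[OF p] pol_cost_def)
  finally show ?thesis .
qed

lemma sumA_zero: "is_policy q \<Longrightarrow> (\<Sum>b\<in>UNIV. q x b * Afun P c \<gamma> q x b) = 0"
  using h_eq[of q q x c] V_bellman[of q c x] by simp

lemma unique0:
  assumes p: "is_policy p" and E: "\<And>x. E x = \<gamma> * (\<Sum>y\<in>UNIV. M p x y * E y)"
  shows "E x = 0"
proof -
  define m where "m = Max (range (\<lambda>x. \<bar>E x\<bar>))"
  have mx: "\<bar>E y\<bar> \<le> m" for y unfolding m_def by (rule Max_ge) auto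
  have "m \<in> range (\<lambda>x. \<bar>E x\<bar>)" unfolding m_def by (rule Max_in) auto
  then obtain x0 where x0: "m = \<bar>E x0\<bar>" by blast
  have "\<bar>E x0\<bar> = \<gamma> * \<bar>\<Sum>y\<in>UNIV. M p x0 y * E y\<bar>" using g0 by (subst E) (simp add: abs_mult)
  also have "\<dots> \<le> \<gamma> * (\<Sum>y\<in>UNIV. M p x0 y * m)"
  proof (intro mult_left_mono g0)
    have "\<bar>\<Sum>y\<in>UNIV. M p x0 y * E y\<bar> \<le> (\<Sum>y\<in>UNIV. \<bar>M p x0 y * E y\<bar>)" by (rule sum_abs)
    also have "\<dots> \<le> (\<Sum>y\<in>UNIV. M p x0 y * m)"
      by (intro sum_mono) (simp add: abs_mult M_nonneg[OF p] mult_left_mono mx)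
    finally show "\<bar>\<Sum>y\<in>UNIV. M p x0 y * E y\<bar> \<le> (\<Sum>y\<in>UNIV. M p x0 y * m)" .
  qed
  also have "\<dots> = \<gamma> * m" by (simp add: sum_distrib_right[symmetric] M_sum[OF p])
  finally have "m \<le> \<gamma> * m" using x0 by simp
  then have "m \<le> 0" using g1 mx[of x0] by (smt (verit) mult_le_cancel_right1)
  then show ?thesis using mx[of x] by simp
qed

lemma PDL:
  assumes p: "is_policy p" and q: "is_policy q"
  shows "Vfun P c \<gamma> p x - Vfun P c \<gamma> q x = G p (\<lambda>y. \<Sum>b\<in>UNIV. p y b * Afun P c \<gamma> q y b) x"
proof -
  define h where "h = (\<lambda>y. \<Sum>b\<in>UNIV. p y b * Afun P c \<gamma> q y b)"
  define E where "E = (\<lambda>x. Vfun P c \<gamma> p x - Vfun P c \<gamma> q x - G p h x)"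
  have "E x = \<gamma> * (\<Sum>y\<in>UNIV. M p x y * E y)" for x
  proof -
    have s: "(\<Sum>y\<in>UNIV. M p x y * E y) = (\<Sum>y\<in>UNIV. M p x y * Vfun P c \<gamma> p y)
       - (\<Sum>y\<in>UNIV. M p x y * Vfun P c \<gamma> q y) - (\<Sum>y\<in>UNIV. M p x y * G p h y)"
      by (simp add: E_def right_diff_distrib sum_subtractf)
    show ?thesis
      using V_bellman[OF p, of c x] G_bellman[OF p, of h x] h_eq[OF p q, of x c]
      by (simp only: s) (simp add: E_def h_def algebra_simps)
  qed
  from unique0[OF p this] show ?thesis unfolding E_def h_def by simp
qed


lemma occ_nonneg: "is_policy p \<Longrightarrow> (\<And>x. 0 \<le> mu x) \<Longrightarrow> 0 \<le> occ p mu y"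
  unfolding occ_def by (intro suminf_nonneg sd_summable mult_nonneg_nonneg sd_nonneg zero_le_power g0) auto

lemma occ_le: "is_policy p \<Longrightarrow> is_dist mu \<Longrightarrow> occ p mu y \<le> 1 / (1 - \<gamma>)"
proof -
  assume p: "is_policy p" and mu: "is_dist mu"
  have "occ p mu y \<le> (\<Sum>t. \<gamma>^t)"
    unfolding occ_def
  proof (rule suminf_le)
    fix t
    have d: "is_dist (state_dist P p mu t)" by (rule sd_dist[OF p mu])
    show "\<gamma>^t * state_dist P p mu t y \<le> \<gamma>^t"
      using mult_left_mono[OF dist_le1[OF d, of y], of "\<gamma>^t"] g0 by simp
  qed (use sd_summable[OF p] g0 g1 in auto)
  also have "\<dots> = 1 / (1 - \<gamma>)" using g0 g1 by (intro suminf_geometric) simp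
  finally show ?thesis .
qed

lemma occ_self: "is_policy p \<Longrightarrow> 1 \<le> occ p (dlt x) x"
proof -
  assume p: "is_policy p"
  have "0 \<le> occ p (state_dist P p (dlt x) 1) x"
    by (intro occ_nonneg p sd_nonneg) (auto simp: dlt_def)
  then show ?thesis using occ_step[OF p, of "dlt x" x] g0 by (simp add: dlt_def)
qed

lemma A_nonneg:
  assumes opt: "is_optimal P c \<gamma> q"
  shows "0 \<le> Afun P c \<gamma> q s a"
proof -
  have q: "is_policy q" using opt by (simp add: is_optimal_def)
  define p' where "p' = (\<lambda>x b. if x = s then dlt a b else q x b)"
  have p': "is_policy p'" unfolding is_policy_def
  proof
    fix x
    show "is_dist (p' x)"
    proof (cases "x = s")
      case True
      then have "p' x = dlt a" by (auto simp: p'_def)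
      then show ?thesis using dist_dlt by simp
    next
      case False
      then have "p' x = q x" by (auto simp: p'_def)
      then show ?thesis using q by (simp add: is_policy_def)
    qed
  qed
  define h where "h = (\<lambda>y. \<Sum>b\<in>UNIV. p' y b * Afun P c \<gamma> q y b)"
  have h: "h y = (if y = s then Afun P c \<gamma> q s a else 0)" for y
  proof (cases "y = s")
    case True
    have "h y = (\<Sum>b\<in>UNIV. if b = a then Afun P c \<gamma> q s b else 0)"
      unfolding h_def by (rule sum.cong) (auto simp: p'_def dlt_def True)
    then show ?thesis using True by simp
  next
    case False
    then show ?thesis using sumA_zero[OF q, of y c] by (simp add: h_def p'_def)
  qed
  have "Vfun P c \<gamma> p' s - Vfun P c \<gamma> q s = G p' h s" unfolding h_def by (rule PDL[OF p' q])
  also have "\<dots> = (\<Sum>z\<in>UNIV. if z = s then occ p' (dlt s) z * Afun P c \<gamma> q s a else 0)"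
    unfolding G_def by (rule sum.cong) (auto simp: h)
  also have "\<dots> = occ p' (dlt s) s * Afun P c \<gamma> q s a" by simp
  finally have e: "Vfun P c \<gamma> p' s - Vfun P c \<gamma> q s = occ p' (dlt s) s * Afun P c \<gamma> q s a" .
  have "Vfun P c \<gamma> q s \<le> Vfun P c \<gamma> p' s" using opt p' by (simp add: is_optimal_def)
  then have "0 \<le> occ p' (dlt s) s * Afun P c \<gamma> q s a" using e by simp
  moreover have "1 \<le> occ p' (dlt s) s" by (rule occ_self[OF p'])
  ultimately show ?thesis by (simp add: zero_le_mult_iff)
qed

lemma pos_A_zero:
  assumes opt: "is_optimal P c \<gamma> q" and A: "0 < Afun P c \<gamma> q s a"
  shows "q s a = 0"
proof -
  have q: "is_policy q" using opt by (simp add: is_optimal_def)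
  have nn: "\<forall>b\<in>UNIV. 0 \<le> q s b * Afun P c \<gamma> q s b"
    using A_nonneg[OF opt] pol_nonneg[OF q] by simp
  have fin: "finite (UNIV::'a set)" by simp
  have "\<forall>b\<in>UNIV. q s b * Afun P c \<gamma> q s b = 0"
    using sumA_zero[OF q, of s c] sum_nonneg_eq_0_iff[OF fin, of "\<lambda>b. q s b * Afun P c \<gamma> q s b"] nn by simp
  then have "q s a * Afun P c \<gamma> q s a = 0" by simp
  then show ?thesis using A by simp
qed

lemma main:
  fixes c :: "'s \<Rightarrow> 'a \<Rightarrow> real" and \<rho> :: "'s \<Rightarrow> real" and ps p :: "'s \<Rightarrow> 'a \<Rightarrow> real"
  assumes opt: "is_optimal P c \<gamma> ps"
    and rho_dist: "is_dist \<rho>"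
    and pol: "is_policy p"
    and nonopt: "f_rho P c \<gamma> \<rho> p - f_rho P c \<gamma> \<rho> ps > 0"
  shows "\<exists>s a. ps s a = 0 \<and> p s a > 0 \<and>
           Afun P c \<gamma> ps s a \<ge>
             (1 - \<gamma>) / (real CARD('s) * real CARD('a)) * (f_rho P c \<gamma> \<rho> p - f_rho P c \<gamma> \<rho> ps) \<and>
           (1 - \<gamma>) / (real CARD('s) * real CARD('a)) * (f_rho P c \<gamma> \<rho> p - f_rho P c \<gamma> \<rho> ps) > 0"
proof -
  have q: "is_policy ps" using opt by (simp add: is_optimal_def)
  define D where "D = f_rho P c \<gamma> \<rho> p - f_rho P c \<gamma> \<rho> ps"
  define h where "h = (\<lambda>y. \<Sum>b\<in>UNIV. p y b * Afun P c \<gamma> ps y b)"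
  define F where "F = (\<lambda>(z, b). occ p \<rho> z * p z b * Afun P c \<gamma> ps z b)"
  define N where "N = real CARD('s) * real CARD('a)"
  have Npos: "N > 0" unfolding N_def by simp
  have "D = (\<Sum>s\<in>UNIV. \<rho> s * (Vfun P c \<gamma> p s - Vfun P c \<gamma> ps s))"
    unfolding D_def f_rho_def by (simp add: right_diff_distrib sum_subtractf)
  also have "\<dots> = (\<Sum>s\<in>UNIV. \<rho> s * G p h s)"
    unfolding h_def by (simp add: PDL[OF pol q])
  also have "\<dots> = (\<Sum>s\<in>UNIV. \<Sum>z\<in>UNIV. \<rho> s * (occ p (dlt s) z * h z))"
    unfolding G_def by (simp add: sum_distrib_left)
  also have "\<dots> = (\<Sum>z\<in>UNIV. \<Sum>s\<in>UNIV. \<rho> s * (occ p (dlt s) z * h z))"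
    by (rule sum.swap)
  also have "\<dots> = (\<Sum>z\<in>UNIV. occ p \<rho> z * h z)"
    by (subst occ_linear[OF pol]) (simp add: sum_distrib_right mult.assoc)
  also have "\<dots> = (\<Sum>z\<in>UNIV. \<Sum>b\<in>UNIV. F (z, b))"
    unfolding h_def F_def by (simp add: sum_distrib_left mult.assoc)
  also have "\<dots> = (\<Sum>x\<in>UNIV \<times> UNIV. F x)"
    using sum.cartesian_product[of "\<lambda>z b. F (z, b)" UNIV UNIV] by simp
  finally have Dsum: "D = (\<Sum>x\<in>UNIV. F x)" by simp
  have Dpos: "D > 0" using nonopt D_def by simp
  have "\<exists>x. F x \<ge> D / N"
  proof (rule ccontr)
    assume "\<not> ?thesis"
    then have "\<forall>x\<in>UNIV. F x < D / N" by (auto simp: not_le)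
    then have "(\<Sum>x\<in>UNIV. F x) < (\<Sum>x\<in>(UNIV::('s \<times> 'a) set). D / N)"
      by (intro sum_strict_mono) auto
    also have "\<dots> = D"
    proof -
      have cc: "card (UNIV::('s \<times> 'a) set) = CARD('s) * CARD('a)"
        by (metis UNIV_Times_UNIV card_cartesian_product)
      show ?thesis using Npos by (simp only: sum_constant cc N_def) simp
    qed
    finally show False using Dsum by simp
  qed
  then obtain z b where zb: "F (z, b) \<ge> D / N" by auto
  have o0: "0 \<le> occ p \<rho> z" by (intro occ_nonneg pol dist_nonneg[OF rho_dist])
  have o1: "occ p \<rho> z \<le> 1 / (1 - \<gamma>)" by (rule occ_le[OF pol rho_dist])
  have p0: "0 \<le> p z b" "p z b \<le> 1" using pol_nonneg[OF pol] pol_le1[OF pol] by auto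
  have DN: "D / N > 0" using Dpos Npos by simp
  have Fpos: "occ p \<rho> z * p z b * Afun P c \<gamma> ps z b > 0" using zb DN F_def by simp
  have op0: "0 \<le> occ p \<rho> z * p z b" using o0 p0 by simp
  have Apos: "Afun P c \<gamma> ps z b > 0" and oppos: "occ p \<rho> z * p z b > 0"
    using Fpos op0 by (auto simp: zero_less_mult_iff)
  have ppos: "p z b > 0" using oppos o0 p0 by (auto simp: zero_less_mult_iff)
  have "(1 - \<gamma>) * occ p \<rho> z \<le> 1" using o1 g1 by (simp add: field_simps)
  then have b1: "(1 - \<gamma>) * (occ p \<rho> z * p z b) \<le> 1"
    using p0 o0 g1 by (smt (verit) mult.assoc mult_left_le mult_nonneg_nonneg)
  have "(1 - \<gamma>) / N * D = (1 - \<gamma>) * (D / N)" by simp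
  also have "\<dots> \<le> (1 - \<gamma>) * F (z, b)" using zb g1 by (intro mult_left_mono) auto
  also have "\<dots> = ((1 - \<gamma>) * (occ p \<rho> z * p z b)) * Afun P c \<gamma> ps z b" by (simp add: F_def mult.assoc)
  also have "\<dots> \<le> Afun P c \<gamma> ps z b" using b1 Apos by (simp add: mult_le_cancel_right1)
  finally have bound: "(1 - \<gamma>) / N * D \<le> Afun P c \<gamma> ps z b" .
  have "(1 - \<gamma>) / N * D > 0" using g1 Npos Dpos by simp
  moreover have "ps z b = 0" by (rule pos_A_zero[OF opt Apos])
  ultimately show ?thesis using bound ppos unfolding N_def D_def by blast
qed

end

theorem lemma3p7:
  fixes P :: "'s::finite \<Rightarrow> 'a::finite \<Rightarrow> 's \<Rightarrow> real"
    and c :: "'s \<Rightarrow> 'a \<Rightarrow> real"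
    and \<gamma> :: real
    and \<rho> :: "'s \<Rightarrow> real"
    and ps p :: "'s \<Rightarrow> 'a \<Rightarrow> real"
  assumes kernel: "is_kernel P"
    and gamma: "0 \<le> \<gamma>" "\<gamma> < 1"
    and opt: "is_optimal P c \<gamma> ps"
    and rho_dist: "is_dist \<rho>"
    and rho_pos: "\<forall>s. \<rho> s > 0"
    and pol: "is_policy p"
    and nonopt: "f_rho P c \<gamma> \<rho> p - f_rho P c \<gamma> \<rho> ps > 0"
  shows "\<exists>s a. ps s a = 0 \<and> p s a > 0 \<and>
           Afun P c \<gamma> ps s a \<ge>
             (1 - \<gamma>) / (real CARD('s) * real CARD('a)) * (f_rho P c \<gamma> \<rho> p - f_rho P c \<gamma> \<rho> ps) \<and>
           (1 - \<gamma>) / (real CARD('s) * real CARD('a)) * (f_rho P c \<gamma> \<rho> p - f_rho P c \<gamma> \<rho> ps) > 0"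
proof -
  interpret mdp P \<gamma> using kernel gamma by unfold_locales
  show ?thesis by (rule main[OF opt rho_dist pol nonopt])
qed

end
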